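(* Let $0<m<L$, $\kappa=L/m$, $\delta\in(0,1)$, $\alpha>0$, and $\rho_\mathrm{GD}(\delta)=\max(1-\alpha m(1-\delta),\ \alpha L(1+\delta)-1)$. Define \[ F(t,\lambda) = -\alpha^2(L-m)^2+2mL\alpha^2\lambda(1-\delta^2) +2\alpha\lambda(m+L)(t-1) + \lambda(2-\delta^2\lambda)(t-1)^2 \] and \[ \rho_\star=\inf\{\rho\ge\rho_\mathrm{GD}(\delta):\ F(\rho,\lambda)\ge0 \text{ and } F(-\rho,\lambda)\ge0 \text{ for some }\lambda\in[0,2/\delta^2]\}. \] Then $\rho_\star=\rho_\mathrm{GD}(\delta)$ if and only if one of the following holds: (1) $\delta<2/(\kappa+1)$ and $\alpha\le \alpha_-:=\frac{1}{1-\delta}\left(\frac{2}{L+m}-\frac{\delta}{m}\right)$; (2) $\delta\in[0,1)$ and $\alpha\ge\alpha_+:=\frac{1}{1+\delta}\left(\frac{2}{L+m}+\frac{\delta}{L}\right)$. *)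

theory Defs
  imports Complex_Main
begin

definition rho_GD :: "real \<Rightarrow> real \<Rightarrow> real \<Rightarrow> real \<Rightarrow> real" where
  "rho_GD m L \<alpha> \<delta> = max (1 - \<alpha> * m * (1 - \<delta>)) (\<alpha> * L * (1 + \<delta>) - 1)"

definition Ffun :: "real \<Rightarrow> real \<Rightarrow> real \<Rightarrow> real \<Rightarrow> real \<Rightarrow> real \<Rightarrow> real" where
  "Ffun m L \<alpha> \<delta> t lam =
     - (\<alpha>^2 * (L - m)^2) + 2 * m * L * \<alpha>^2 * lam * (1 - \<delta>^2)
     + 2 * \<alpha> * lam * (m + L) * (t - 1) + lam * (2 - \<delta>^2 * lam) * (t - 1)^2"

definition rho_star :: "real \<Rightarrow> real \<Rightarrow> real \<Rightarrow> real \<Rightarrow> real" where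
  "rho_star m L \<alpha> \<delta> = Inf {\<rho>. \<rho> \<ge> rho_GD m L \<alpha> \<delta> \<and>
      (\<exists>lam\<in>{0..2 / \<delta>^2}. Ffun m L \<alpha> \<delta> \<rho> lam \<ge> 0 \<and> Ffun m L \<alpha> \<delta> (-\<rho>) lam \<ge> 0)}"

end

theory Submission
  imports Defs "HOL-Analysis.Analysis"
begin


lemma idA: fixes a b d lam :: real
  assumes "c = a*(1-d)"
  shows "-((b-a)^2) + 2*a*b*lam*(1-d^2) + 2*lam*(a+b)*((1-c)-1) + lam*(2-d^2*lam)*((1-c)-1)^2 = -((d*c*lam - (b-a))^2)"
  using assms by algebra
lemma idA2: fixes a b d lam :: real
  assumes "c = a*(1-d)" "d*c*lam = b-a"
  shows "d*c^2*(-((b-a)^2) + 2*a*b*lam*(1-d^2) + 2*lam*(a+b)*((-(1-c))-1) + lam*(2-d^2*lam)*((-(1-c))-1)^2) = 4*(b-a)*(1-c)*(2*a - (a*(1-d)+d)*(a+b))"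
  using assms by algebra
lemma idB: fixes a b d lam :: real
  assumes "e = b*(1+d)"
  shows "-((b-a)^2) + 2*a*b*lam*(1-d^2) + 2*lam*(a+b)*((-(e-1))-1) + lam*(2-d^2*lam)*((-(e-1))-1)^2 = -((d*e*lam - (b-a))^2)"
  using assms by algebra
lemma idB2: fixes a b d lam :: real
  assumes "e = b*(1+d)" "d*e*lam = b-a"
  shows "d*e^2*(-((b-a)^2) + 2*a*b*lam*(1-d^2) + 2*lam*(a+b)*((e-1)-1) + lam*(2-d^2*lam)*((e-1)-1)^2) = 4*(b-a)*(e-1)*((b*(1+d)-d)*(a+b) - 2*b)"
  using assms by algebra

lemma regA: fixes a b d :: real
  assumes "0<a" "a<b" "0<d" "d<1" "2*a - (a*(1-d)+d)*(a+b) \<ge> 0"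
  shows "a*(1-d)+b*(1+d) \<le> 2"
proof (cases "a+b \<ge> 2*a*b")
  case True
  have "a*(a*(1-d)+b*(1+d)) = a*(1-d)*(a+b) + 2*a*b*d" by algebra
  also have "\<dots> \<le> a*(1-d)*(a+b) + d*(a+b)" using True assms by (simp add: mult_left_mono mult.commute mult.left_commute)
  also have "\<dots> \<le> a*2" using assms by (simp add: algebra_simps)
  finally show ?thesis using assms by (simp add: mult_le_cancel_left)
next
  case False
  have "a+b > 2"
  proof (rule ccontr)
    assume "\<not> a+b > 2"
    hence "(a+b)*(a+b) \<le> 2*(a+b)" using assms by (intro mult_right_mono) auto
    hence "(a+b)^2 \<le> 2*(a+b)" by (simp add: power2_eq_square)
    moreover have "4*a*b \<le> (a+b)^2" using zero_le_square[of "a-b"] by (simp add: power2_eq_square algebra_simps)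
    ultimately show False using False by (simp add: power2_eq_square algebra_simps)
  qed
  have "a*(1-d)*2 \<le> a*(1-d)*(a+b)" using \<open>a+b>2\<close> assms by (intro mult_left_mono) auto
  moreover have "d*(2*a) < d*(a+b)" using assms by simp
  ultimately have "2*a < (a*(1-d)+d)*(a+b)" by (simp add: algebra_simps)
  thus ?thesis using assms by linarith
qed

lemma regB: fixes a b d :: real
  assumes "0<a" "a<b" "0<d" "d<1" "(b*(1+d)-d)*(a+b) - 2*b \<ge> 0"
  shows "a*(1-d)+b*(1+d) \<ge> 2"
proof (cases "a+b \<ge> 2*a*b")
  case True
  have "b*2 \<le> b*(1+d)*(a+b) - d*(a+b)" using assms by (simp add: algebra_simps)
  also have "\<dots> \<le> b*(1+d)*(a+b) - 2*a*b*d" using True assms by (simp add: mult_left_mono mult.commute mult.left_commute)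
  also have "\<dots> = b*(a*(1-d)+b*(1+d))" by algebra
  finally show ?thesis using assms by (simp add: mult_le_cancel_left)
next
  case False
  have "a+b > 2"
  proof (rule ccontr)
    assume "\<not> a+b > 2"
    hence "(a+b)*(a+b) \<le> 2*(a+b)" using assms by (intro mult_right_mono) auto
    hence "(a+b)^2 \<le> 2*(a+b)" by (simp add: power2_eq_square)
    moreover have "4*a*b \<le> (a+b)^2" using zero_le_square[of "a-b"] by (simp add: power2_eq_square algebra_simps)
    ultimately show False using False by (simp add: power2_eq_square algebra_simps)
  qed
  have "d*(b-a) \<ge> 0" using assms by simp
  thus ?thesis using \<open>a+b>2\<close> by (simp add: algebra_simps)
qed

definition fab :: "real \<Rightarrow> real \<Rightarrow> real \<Rightarrow> real \<Rightarrow> real \<Rightarrow> real" where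
  "fab a b d t lam = -((b-a)^2) + 2*a*b*lam*(1-d^2) + 2*lam*(a+b)*(t-1) + lam*(2-d^2*lam)*(t-1)^2"

lemma core:
  fixes a b d :: real
  assumes "0<a" "a<b" "0<d" "d<1"
  defines "r \<equiv> max (1 - a*(1-d)) (b*(1+d)-1)"
  shows "(\<exists>lam\<in>{0..2/d^2}. fab a b d r lam \<ge> 0 \<and> fab a b d (-r) lam \<ge> 0) \<longleftrightarrow>
     (2*a - (a*(1-d)+d)*(a+b) \<ge> 0 \<or> (b*(1+d)-d)*(a+b) - 2*b \<ge> 0)"
proof
  assume "\<exists>lam\<in>{0..2/d^2}. fab a b d r lam \<ge> 0 \<and> fab a b d (-r) lam \<ge> 0"
  then obtain lam where l1: "fab a b d r lam \<ge> 0" and l2: "fab a b d (-r) lam \<ge> 0" by blast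
  define c where "c = a*(1-d)"
  define e where "e = b*(1+d)"
  have c0: "c > 0" using assms by (simp add: c_def)
  have e0: "e > 0" using assms by (simp add: e_def)
  have "a*d > 0" "b*d > 0" using assms by auto
  moreover have "(1-c) + (e-1) = b - a + a*d + b*d" unfolding c_def e_def by (simp add: algebra_simps)
  ultimately have sum: "(1-c) + (e-1) > 0" using assms by linarith
  show "(2*a - (a*(1-d)+d)*(a+b) \<ge> 0 \<or> (b*(1+d)-d)*(a+b) - 2*b \<ge> 0)"
  proof (cases "e - 1 \<le> 1 - c")
    case True
    hence r: "r = 1 - c" unfolding r_def c_def e_def by simp
    have "fab a b d r lam = -((d*c*lam - (b-a))^2)" unfolding r fab_def using idA[OF c_def] by simp
    with l1 have "(d*c*lam - (b-a))^2 = 0" using zero_le_power2[of "d*c*lam - (b-a)"] by linarith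
    hence h: "d*c*lam = b-a" by simp
    have "d*c^2*fab a b d (-r) lam = 4*(b-a)*(1-c)*(2*a - (a*(1-d)+d)*(a+b))"
      unfolding r fab_def using idA2[OF c_def h] by simp
    moreover have "d*c^2*fab a b d (-r) lam \<ge> 0" using l2 assms c0 by simp
    moreover have "4*(b-a)*(1-c) > 0" using True sum assms by simp
    ultimately have "(2*a - (a*(1-d)+d)*(a+b)) \<ge> 0"
      by (metis zero_le_mult_iff not_less)
    thus ?thesis by simp
  next
    case False
    hence r: "r = e - 1" unfolding r_def c_def e_def by simp
    have "fab a b d (-r) lam = -((d*e*lam - (b-a))^2)" unfolding r fab_def using idB[OF e_def] by simp
    with l2 have "(d*e*lam - (b-a))^2 = 0" using zero_le_power2[of "d*e*lam - (b-a)"] by linarith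
    hence h: "d*e*lam = b-a" by simp
    have "d*e^2*fab a b d r lam = 4*(b-a)*(e-1)*((b*(1+d)-d)*(a+b) - 2*b)"
      unfolding r fab_def using idB2[OF e_def h] by simp
    moreover have "d*e^2*fab a b d r lam \<ge> 0" using l1 assms e0 by simp
    moreover have "4*(b-a)*(e-1) > 0" using False sum assms by simp
    ultimately have "((b*(1+d)-d)*(a+b) - 2*b) \<ge> 0"
      by (metis zero_le_mult_iff not_less)
    thus ?thesis by simp
  qed
next
  assume H: "(2*a - (a*(1-d)+d)*(a+b) \<ge> 0 \<or> (b*(1+d)-d)*(a+b) - 2*b \<ge> 0)"
  define c where "c = a*(1-d)"
  define e where "e = b*(1+d)"
  have c0: "c > 0" using assms by (simp add: c_def)
  have e0: "e > 0" using assms by (simp add: e_def)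
  have "a*d > 0" "b*d > 0" using assms by auto
  moreover have "(1-c) + (e-1) = b - a + a*d + b*d" unfolding c_def e_def by (simp add: algebra_simps)
  ultimately have sum: "(1-c) + (e-1) > 0" using assms by linarith
  from H show "\<exists>lam\<in>{0..2/d^2}. fab a b d r lam \<ge> 0 \<and> fab a b d (-r) lam \<ge> 0"
  proof
    assume QA: "2*a - (a*(1-d)+d)*(a+b) \<ge> 0"
    have "e - 1 \<le> 1 - c" using regA[OF assms(1-4) QA] unfolding c_def e_def by simp
    hence r: "r = 1 - c" unfolding r_def c_def e_def by simp
    have pos: "1 - c > 0" using \<open>e - 1 \<le> 1 - c\<close> sum by simp
    define lam where "lam = (b-a)/(d*c)"
    have h: "d*c*lam = b-a" unfolding lam_def using c0 assms by simp
    have "a*(1-d)*(a+b) \<ge> 0" using assms by simp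
    hence "d*(a+b) \<le> 2*a" using QA by (simp add: algebra_simps)
    hence dc: "d*(b-a) \<le> 2*c" unfolding c_def by (simp add: algebra_simps)
    have "lam \<ge> 0" unfolding lam_def using assms c0 by simp
    moreover have "lam \<le> 2/d^2"
    proof -
      have "d*(d*(b-a)) \<le> d*(2*c)" using dc assms by (intro mult_left_mono) auto
      thus ?thesis unfolding lam_def using assms c0 by (simp add: field_simps power2_eq_square)
    qed
    moreover have "fab a b d r lam \<ge> 0" unfolding r fab_def using idA[OF c_def, of b lam] h by simp
    moreover have "fab a b d (-r) lam \<ge> 0"
    proof -
      have "d*c^2*fab a b d (-r) lam = 4*(b-a)*(1-c)*(2*a - (a*(1-d)+d)*(a+b))"
        unfolding r fab_def using idA2[OF c_def h] by simp
      moreover have "4*(b-a)*(1-c)*(2*a - (a*(1-d)+d)*(a+b)) \<ge> 0" using QA pos assms by simp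
      moreover have "d*c^2 > 0" using assms c0 by simp
      ultimately show ?thesis by (metis zero_le_mult_iff not_less)
    qed
    ultimately show ?thesis by auto
  next
    assume QB: "(b*(1+d)-d)*(a+b) - 2*b \<ge> 0"
    have "e - 1 \<ge> 1 - c" using regB[OF assms(1-4) QB] unfolding c_def e_def by simp
    hence r: "r = e - 1" unfolding r_def c_def e_def by simp
    have pos: "e - 1 > 0" using \<open>e - 1 \<ge> 1 - c\<close> sum by simp
    define lam where "lam = (b-a)/(d*e)"
    have h: "d*e*lam = b-a" unfolding lam_def using e0 assms by simp
    have "d*(b-a) \<le> 1*(b-a)" using assms by (intro mult_right_mono) auto
    hence d1: "d*(b-a) \<le> b-a" by simp
    have "b*d > 0" using assms by simp
    moreover have "e = b + b*d" unfolding e_def by (simp add: algebra_simps)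
    ultimately have "b - a \<le> 2*e" using assms(1-4) by linarith
    with d1 have de: "d*(b-a) \<le> 2*e" by linarith
    have "lam \<ge> 0" unfolding lam_def using assms e0 by simp
    moreover have "lam \<le> 2/d^2"
    proof -
      have "d*(d*(b-a)) \<le> d*(2*e)" using de assms by (intro mult_left_mono) auto
      thus ?thesis unfolding lam_def using assms e0 by (simp add: field_simps power2_eq_square)
    qed
    moreover have "fab a b d (-r) lam \<ge> 0" unfolding r fab_def using idB[OF e_def, of a lam] h by simp
    moreover have "fab a b d r lam \<ge> 0"
    proof -
      have "d*e^2*fab a b d r lam = 4*(b-a)*(e-1)*((b*(1+d)-d)*(a+b) - 2*b)"
        unfolding r fab_def using idB2[OF e_def h] by simp
      moreover have "4*(b-a)*(e-1)*((b*(1+d)-d)*(a+b) - 2*b) \<ge> 0" using QB pos assms by simp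
      moreover have "d*e^2 > 0" using assms e0 by simp
      ultimately show ?thesis by (metis zero_le_mult_iff not_less)
    qed
    ultimately show ?thesis by auto
  qed
qed


lemma pmn: "(x::real) > 0 \<Longrightarrow> (0 \<le> x*z) \<longleftrightarrow> (0 \<le> z)"
  by (simp add: zero_le_mult_iff)

lemma big1:
  fixes a b d y :: real
  assumes "0<a" "a<b" "0\<le>d" "d<1" "y \<ge> b - a"
  shows "fab a b d (1+y) 1 \<ge> 0"
proof -
  have eq: "fab a b d (1+y) 1 = -((b-a)^2) + 2*a*b*(1-d^2) + 2*(a+b)*y + (2-d^2)*y^2"
    by (simp add: fab_def)
  have "(b-a)^2 \<le> y^2" using assms by (intro power_mono) auto
  moreover have "d^2 \<le> 1" using assms by (simp add: power_le_one)
  hence "y^2*d^2 \<le> y^2*1" by (intro mult_left_mono) auto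
  hence "y^2 \<le> (2-d^2)*y^2" by (simp add: algebra_simps)
  moreover have "2*a*b*(1-d^2) \<ge> 0" using assms \<open>d^2 \<le> 1\<close> by simp
  moreover have "2*(a+b)*y \<ge> 0" using assms by simp
  ultimately show ?thesis unfolding eq by linarith
qed

lemma big2:
  fixes a b d X :: real
  assumes "0<a" "a<b" "0\<le>d" "d<1" "X \<ge> 3*(a+b)"
  shows "fab a b d (1-X) 1 \<ge> 0"
proof -
  have eq: "fab a b d (1-X) 1 = -((b-a)^2) + 2*a*b*(1-d^2) - 2*(a+b)*X + (2-d^2)*X^2"
    by (simp add: fab_def power2_eq_square algebra_simps)
  have "d^2 \<le> 1" using assms by (simp add: power_le_one)
  hence "X^2*d^2 \<le> X^2*1" by (intro mult_left_mono) auto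
  hence "X^2 \<le> (2-d^2)*X^2" by (simp add: algebra_simps)
  moreover have "2*a*b*(1-d^2) \<ge> 0" using assms \<open>d^2 \<le> 1\<close> by simp
  moreover have "X^2 \<ge> (3*(a+b))*X" unfolding power2_eq_square using assms by (intro mult_right_mono) auto
  moreover have "(a+b)*X \<ge> (a+b)*(3*(a+b))" using assms by (intro mult_left_mono) auto
  moreover have "(b-a)^2 \<le> (a+b)*(3*(a+b))" using assms by (simp add: power2_eq_square algebra_simps)
  ultimately show ?thesis unfolding eq by (simp add: algebra_simps)
qed

theorem lemma3p2:
  fixes m L \<alpha> \<delta> :: real
  assumes "0 < m" "m < L" "0 < \<delta>" "\<delta> < 1" "0 < \<alpha>"
  shows "rho_star m L \<alpha> \<delta> = rho_GD m L \<alpha> \<delta> \<longleftrightarrow>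
    ((\<delta> < 2 / (L / m + 1) \<and> \<alpha> \<le> (1 / (1 - \<delta>)) * (2 / (L + m) - \<delta> / m)) \<or>
     (0 \<le> \<delta> \<and> \<delta> < 1 \<and> \<alpha> \<ge> (1 / (1 + \<delta>)) * (2 / (L + m) + \<delta> / L)))"
proof -
  define a where "a = \<alpha>*m"
  define b where "b = \<alpha>*L"
  have a0: "0 < a" unfolding a_def using assms by simp
  have ab: "a < b" unfolding a_def b_def using assms by simp
  have F: "\<And>t lam. Ffun m L \<alpha> \<delta> t lam = fab a b \<delta> t lam"
    unfolding Ffun_def fab_def a_def b_def by (simp add: power2_eq_square algebra_simps)
  define r where "r = rho_GD m L \<alpha> \<delta>"
  have R: "r = max (1 - a*(1-\<delta>)) (b*(1+\<delta>)-1)"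
    unfolding r_def rho_GD_def a_def b_def by (simp add: algebra_simps)
  have "a*\<delta> > 0" "b*\<delta> > 0" using a0 ab assms by auto
  moreover have "(1 - a*(1-\<delta>)) + (b*(1+\<delta>)-1) = b - a + a*\<delta> + b*\<delta>" by (simp add: algebra_simps)
  ultimately have "(1 - a*(1-\<delta>)) + (b*(1+\<delta>)-1) > 0" using ab by linarith
  hence r0: "r > 0" unfolding R by linarith
  define S where "S = {\<rho>. \<rho> \<ge> r \<and> (\<exists>lam\<in>{0..2 / \<delta>^2}. Ffun m L \<alpha> \<delta> \<rho> lam \<ge> 0 \<and> Ffun m L \<alpha> \<delta> (-\<rho>) lam \<ge> 0)}"
  have rs: "rho_star m L \<alpha> \<delta> = Inf S" unfolding rho_star_def S_def r_def by simp
  define R0 where "R0 = r + 3*(a+b) + 1"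
  have R0S: "R0 \<in> S"
  proof -
    have "\<delta>^2 \<le> 1" using assms by (simp add: power_le_one)
    hence "(1::real) \<le> 2/\<delta>^2" using assms by (simp add: field_simps)
    moreover have "fab a b \<delta> R0 1 \<ge> 0"
    proof -
      have "R0 - 1 \<ge> b - a" unfolding R0_def using a0 ab r0 by simp
      from big1[OF a0 ab _ assms(4) this] assms have "fab a b \<delta> (1 + (R0 - 1)) 1 \<ge> 0" by simp
      thus ?thesis by simp
    qed
    moreover have "fab a b \<delta> (-R0) 1 \<ge> 0"
    proof -
      have "R0 + 1 \<ge> 3*(a+b)" unfolding R0_def using a0 ab r0 by simp
      from big2[OF a0 ab _ assms(4) this] assms have "fab a b \<delta> (1 - (R0 + 1)) 1 \<ge> 0" by simp
      thus ?thesis by simp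
    qed
    moreover have "R0 \<ge> r" unfolding R0_def using a0 ab by simp
    ultimately show ?thesis unfolding S_def F by force
  qed
  have lb: "\<And>x. x \<in> S \<Longrightarrow> r \<le> x" unfolding S_def by simp
  have bdd: "bdd_below S" using lb by (auto simp: bdd_below_def)
  have key: "Inf S = r \<longleftrightarrow> r \<in> S"
  proof
    assume "r \<in> S"
    thus "Inf S = r" using lb by (intro cInf_eq_minimum) auto
  next
    assume IS: "Inf S = r"
    define K where "K = ({r..R0} \<times> {0..2/\<delta>^2}) \<inter>
       {p. 0 \<le> Ffun m L \<alpha> \<delta> (fst p) (snd p) \<and> 0 \<le> Ffun m L \<alpha> \<delta> (- fst p) (snd p)}"
    define T where "T = S \<inter> {..R0}"
    have TK: "T = fst ` K"
    proof
      show "T \<subseteq> fst ` K"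
      proof
        fix x assume "x \<in> T"
        then obtain lam where "lam \<in> {0..2/\<delta>^2}" "Ffun m L \<alpha> \<delta> x lam \<ge> 0" "Ffun m L \<alpha> \<delta> (-x) lam \<ge> 0" "r \<le> x" "x \<le> R0"
          unfolding T_def S_def by auto
        hence "(x, lam) \<in> K" unfolding K_def by auto
        thus "x \<in> fst ` K" by force
      qed
    next
      show "fst ` K \<subseteq> T" unfolding K_def T_def S_def by force
    qed
    have contF: "continuous_on UNIV (\<lambda>p::real\<times>real. Ffun m L \<alpha> \<delta> (fst p) (snd p))"
      unfolding Ffun_def by (intro continuous_intros)
    have contF2: "continuous_on UNIV (\<lambda>p::real\<times>real. Ffun m L \<alpha> \<delta> (- fst p) (snd p))"
      unfolding Ffun_def by (intro continuous_intros)
    have "closed {p::real\<times>real. 0 \<le> Ffun m L \<alpha> \<delta> (fst p) (snd p) \<and> 0 \<le> Ffun m L \<alpha> \<delta> (- fst p) (snd p)}"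
      by (intro closed_Collect_conj closed_Collect_le continuous_on_const contF contF2)
    moreover have "compact ({r..R0} \<times> {0..2/\<delta>^2})" by (intro compact_Times compact_Icc)
    ultimately have "compact K" unfolding K_def using compact_Int_closed by blast
    hence "compact T" unfolding TK by (intro compact_continuous_image continuous_on_fst continuous_on_id)
    hence cT: "closed T" by (rule compact_imp_closed)
    have TS: "T \<subseteq> S" unfolding T_def by auto
    have "R0 \<in> T" unfolding T_def using R0S by simp
    hence Tne: "T \<noteq> {}" by auto
    have bddT: "bdd_below T" using bdd TS by (meson bdd_below_mono)
    have inT: "Inf T \<in> T" using closed_contains_Inf[OF Tne bddT cT] .
    have "Inf T \<le> Inf S"
    proof (rule cInf_greatest)
      show "S \<noteq> {}" using R0S by auto
    next
      fix x assume xS: "x \<in> S"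
      show "Inf T \<le> x"
      proof (cases "x \<le> R0")
        case True
        hence "x \<in> T" unfolding T_def using xS by simp
        thus ?thesis using bddT by (rule cInf_lower)
      next
        case False
        have "Inf T \<le> R0" using \<open>R0 \<in> T\<close> bddT by (rule cInf_lower)
        thus ?thesis using False by simp
      qed
    qed
    moreover have "r \<le> Inf T" using inT TS lb by auto
    ultimately have "Inf T = r" using IS by simp
    thus "r \<in> S" using inT TS by auto
  qed
  have mem: "r \<in> S \<longleftrightarrow> (2*a - (a*(1-\<delta>)+\<delta>)*(a+b) \<ge> 0 \<or> (b*(1+\<delta>)-\<delta>)*(a+b) - 2*b \<ge> 0)"
  proof -
    have "r \<in> S \<longleftrightarrow> (\<exists>lam\<in>{0..2/\<delta>^2}. fab a b \<delta> r lam \<ge> 0 \<and> fab a b \<delta> (-r) lam \<ge> 0)"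
      unfolding S_def F by simp
    also have "\<dots> \<longleftrightarrow> (2*a - (a*(1-\<delta>)+\<delta>)*(a+b) \<ge> 0 \<or> (b*(1+\<delta>)-\<delta>)*(a+b) - 2*b \<ge> 0)"
      unfolding R by (rule core[OF a0 ab assms(3,4)])
    finally show ?thesis .
  qed
  have QA: "2*a - (a*(1-\<delta>)+\<delta>)*(a+b) = \<alpha> * ((2*m - \<delta>*(L+m)) - \<alpha>*((1-\<delta>)*m*(L+m)))"
    unfolding a_def b_def by (simp add: algebra_simps)
  have QB: "(b*(1+\<delta>)-\<delta>)*(a+b) - 2*b = \<alpha> * (\<alpha>*((1+\<delta>)*L*(L+m)) - (2*L + \<delta>*(L+m)))"
    unfolding a_def b_def by (simp add: algebra_simps)
  have e1: "(1 / (1 - \<delta>)) * (2 / (L + m) - \<delta> / m) = (2*m - \<delta>*(L+m)) / ((1-\<delta>)*m*(L+m))"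
    using assms by (simp add: field_simps)
  have e2: "(1 / (1 + \<delta>)) * (2 / (L + m) + \<delta> / L) = (2*L + \<delta>*(L+m)) / ((1+\<delta>)*L*(L+m))"
    using assms by (simp add: field_simps)
  have e3: "2 / (L / m + 1) = 2*m/(L+m)" using assms by (simp add: field_simps)
  have pA: "(1-\<delta>)*m*(L+m) > 0" using assms by simp
  have pB: "(1+\<delta>)*L*(L+m) > 0" using assms by simp
  have c1: "(\<delta> < 2 / (L / m + 1) \<and> \<alpha> \<le> (1 / (1 - \<delta>)) * (2 / (L + m) - \<delta> / m)) \<longleftrightarrow>
      2*a - (a*(1-\<delta>)+\<delta>)*(a+b) \<ge> 0"
  proof -
    have "\<alpha> \<le> (1 / (1 - \<delta>)) * (2 / (L + m) - \<delta> / m) \<longleftrightarrow> \<alpha>*((1-\<delta>)*m*(L+m)) \<le> 2*m - \<delta>*(L+m)"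
      unfolding e1 using pA by (simp add: pos_le_divide_eq)
    moreover have "2*a - (a*(1-\<delta>)+\<delta>)*(a+b) \<ge> 0 \<longleftrightarrow> \<alpha>*((1-\<delta>)*m*(L+m)) \<le> 2*m - \<delta>*(L+m)"
      unfolding QA pmn[OF assms(5)] by linarith
    moreover have "\<alpha>*((1-\<delta>)*m*(L+m)) \<le> 2*m - \<delta>*(L+m) \<Longrightarrow> \<delta> < 2 / (L / m + 1)"
    proof -
      assume h: "\<alpha>*((1-\<delta>)*m*(L+m)) \<le> 2*m - \<delta>*(L+m)"
      have "\<alpha>*((1-\<delta>)*m*(L+m)) > 0" using pA assms by simp
      hence "\<delta>*(L+m) < 2*m" using h by linarith
      thus ?thesis unfolding e3 using assms by (simp add: pos_less_divide_eq)
    qed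
    ultimately show ?thesis by blast
  qed
  have c2: "(0 \<le> \<delta> \<and> \<delta> < 1 \<and> \<alpha> \<ge> (1 / (1 + \<delta>)) * (2 / (L + m) + \<delta> / L)) \<longleftrightarrow>
      (b*(1+\<delta>)-\<delta>)*(a+b) - 2*b \<ge> 0"
  proof -
    have "\<alpha> \<ge> (1 / (1 + \<delta>)) * (2 / (L + m) + \<delta> / L) \<longleftrightarrow> \<alpha>*((1+\<delta>)*L*(L+m)) \<ge> 2*L + \<delta>*(L+m)"
      unfolding e2 using pB by (simp add: pos_divide_le_eq)
    moreover have "(b*(1+\<delta>)-\<delta>)*(a+b) - 2*b \<ge> 0 \<longleftrightarrow> \<alpha>*((1+\<delta>)*L*(L+m)) \<ge> 2*L + \<delta>*(L+m)"
      unfolding QB pmn[OF assms(5)] by linarith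
    ultimately show ?thesis using assms by auto
  qed
  show ?thesis unfolding rs r_def[symmetric] key mem c1 c2 ..
qed

end
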